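(* Let $\mathbf{f}$ be a simple problem and $\mathbf{g}\subseteq\mathbf{f}$ a subproblem. Let $y\in\operatorname{Int}\mathbf{f}X^*(\mathbf{g})$. Then for every neighborhood $U\subseteq\mathbf{f}X^*(\mathbf{g})$ of $y$ and every $\mathbf{h}$ with $\emptyset\subsetneq\mathbf{h}\subsetneq\mathbf{g}$, there exists a point $v\in U$ such that $v$ $\mathbf{h}$-dominates $y$ and $y$ $(\mathbf{g}\setminus\mathbf{h})$-dominates $v$.
   Context: A problem is a finite set $\mathbf{f}=\{f_1,\dots,f_m\}$ of functions $f_i:\mathbb{R}^n\to\mathbb{R}$ together with a feasible region $X\subseteq\mathbb{R}^n$, to be minimized simultaneously; its evaluation map is $x\mapsto(f_1(x),\dots,f_m(x))$. A subproblem $\mathbf{g}\subseteq\mathbf{f}$ is a subset of these functions (including $\emptyset$ and $\mathbf{f}$), with the same $X$; its evaluation map is $x\mapsto(f_i(x))_{f_i\in\mathbf{g}}\in\mathbb{R}^{|\mathbf{g}|}$. The Pareto set $X^*(\mathbf{g})$ is the set of $x^*\in X$ for which there is no $x\in X$ with $f_i(x)\le f_i(x^* )$ for all $f_i\in\mathbf{g}$ and $f_j(x)<f_j(x^* )$ for some $f_j\in\mathbf{g}$; by convention $X^*(\emptyset)=\emptyset$. $\mathbf{f}X^*(\mathbf{g})$ denotes the image of $X^*(\mathbf{g})$ under the evaluation map of $\mathbf{f}$. For $u,v\in\mathbb{R}^m$ and $\mathbf{h}\subseteq\mathbf{f}$, $u$ $\mathbf{h}$-dominates $v$ if $u_i\le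 v_i$ for all $i$ with $f_i\in\mathbf{h}$ and $u_j<v_j$ for some $j$ with $f_j\in\mathbf{h}$. A problem $\mathbf{f}$ is simple if every subproblem $\mathbf{g}\subseteq\mathbf{f}$ with $k=|\mathbf{g}|$ objectives satisfies: (S1) $X^*(\mathbf{g})$ is homeomorphic to $\Delta^{k-1}=\{t\in[0,1]^k:\sum t_i=1\}$ (with $\Delta^{-1}=\emptyset$); (S2) the evaluation map of $\mathbf{g}$ restricted to $X^*(\mathbf{g})$ is a topological embedding into $\mathbb{R}^k$. For a simple problem, each $\mathbf{f}X^*(\mathbf{g})$ is homeomorphic to $\Delta^{|\mathbf{g}|-1}$, hence a topological manifold with boundary; $\operatorname{Int}$ and $\partial$ denote its manifold interior and manifold boundary. All sets carry the subspace topology from Euclidean space. *)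

theory Defs
  imports "HOL-Analysis.Analysis"
begin

text \<open>A problem: objectives f i :: real^'n => real indexed by the finite type 'm
  (so m = CARD('m)), feasible region X. A subproblem is a set g :: 'm set.
  Values in R^m are vectors of type real^'m.\<close>

definition eval_map :: "('m::finite \<Rightarrow> real^'n \<Rightarrow> real) \<Rightarrow> real^'n \<Rightarrow> real^'m" where
  "eval_map f x = (\<chi> i. f i x)"

text \<open>Evaluation map of subproblem g, into R^|g| realised as the coordinate
  subspace of real^'m of vectors vanishing outside g.\<close>
definition eval_sub :: "('m::finite \<Rightarrow> real^'n \<Rightarrow> real) \<Rightarrow> 'm set \<Rightarrow> real^'n \<Rightarrow> real^'m" where
  "eval_sub f g x = (\<chi> i. if i \<in> g then f i x else 0)"

definition dominates :: "'m::finite set \<Rightarrow> real^'m \<Rightarrow> real^'m \<Rightarrow> bool" where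
  "dominates h u v \<longleftrightarrow> (\<forall>i\<in>h. u$i \<le> v$i) \<and> (\<exists>j\<in>h. u$j < v$j)"

definition pareto_set :: "(real^'n) set \<Rightarrow> ('m::finite \<Rightarrow> real^'n \<Rightarrow> real) \<Rightarrow> 'm set \<Rightarrow> (real^'n) set" where
  "pareto_set X f g = (if g = {} then {} else
     {xs \<in> X. \<not> (\<exists>x\<in>X. dominates g (eval_map f x) (eval_map f xs))})"

text \<open>Standard simplex Delta^{|g|-1}, realised inside the coordinate subspace R^g.\<close>
definition simplex_on :: "'m::finite set \<Rightarrow> (real^'m) set" where
  "simplex_on g = {t. (\<forall>i. i \<notin> g \<longrightarrow> t$i = 0) \<and> (\<forall>i\<in>g. 0 \<le> t$i \<and> t$i \<le> 1) \<and> (\<Sum>i\<in>g. t$i) = 1}"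

definition simple_problem :: "(real^'n) set \<Rightarrow> ('m::finite \<Rightarrow> real^'n \<Rightarrow> real) \<Rightarrow> bool" where
  "simple_problem X f \<longleftrightarrow> (\<forall>g::'m set.
      (pareto_set X f g homeomorphic simplex_on g) \<and>
      (\<exists>k. homeomorphism (pareto_set X f g) (eval_sub f g ` pareto_set X f g) (eval_sub f g) k))"

definition manifold_interior :: "nat \<Rightarrow> 'a::topological_space set \<Rightarrow> 'a set" where
  "manifold_interior d M = {y \<in> M. \<exists>W V. openin (top_of_set M) W \<and> y \<in> W \<and>
      openin (Euclidean_space d) V \<and>
      top_of_set W homeomorphic_space subtopology (Euclidean_space d) V}"

end

theory Submission imports Defs "HOL-Homology.Invariance_of_Domain" begin

lemma iod_lemma:
  fixes p :: "'a::euclidean_space \<Rightarrow> 'b::euclidean_space"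
  assumes hom: "top_of_set W homeomorphic_space subtopology (Euclidean_space n) V"
   and V: "openin (Euclidean_space n) V"
   and W1: "openin (top_of_set W) W1"
   and H: "subspace H" and dH: "dim H \<le> n"
   and cont: "continuous_on W p" and pim: "p ` W \<subseteq> H" and inj: "inj_on p W"
  shows "openin (top_of_set H) (p ` W1)"
proof -
  obtain \<phi> \<phi>' where hm: "homeomorphic_maps (top_of_set W) (subtopology (Euclidean_space n) V) \<phi> \<phi>'"
    using hom by (auto simp: homeomorphic_space_def)
  obtain \<psi> where \<psi>: "homeomorphic_map (top_of_set H) (Euclidean_space (dim H)) \<psi>"
    using homeomorphic_subspace_Euclidean_space_dim[OF H]
    by (auto simp: homeomorphic_space_def homeomorphic_maps_map)
  have W1W: "W1 \<subseteq> W" using W1 by (meson openin_imp_subset topspace_euclidean_subtopology)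
  define V1 where "V1 = \<phi> ` W1"
  have hmap: "homeomorphic_map (top_of_set W) (subtopology (Euclidean_space n) V) \<phi>"
    using hm homeomorphic_maps_map by blast
  have "openin (subtopology (Euclidean_space n) V) V1"
    unfolding V1_def using homeomorphic_map_openness[OF hmap] W1W W1 by auto
  then have V1: "openin (Euclidean_space n) V1"
    using V openin_trans_full by blast
  have V1V: "V1 \<subseteq> V"
    using \<open>openin (subtopology (Euclidean_space n) V) V1\<close> openin_imp_subset by fastforce
  have c1: "continuous_map (subtopology (Euclidean_space n) V) (top_of_set W) \<phi>'"
    using hm by (simp add: homeomorphic_maps_def)
  have c1': "continuous_map (subtopology (Euclidean_space n) V1) (top_of_set W) \<phi>'"
    using continuous_map_from_subtopology_mono[OF c1 V1V] .
  have c2: "continuous_map (top_of_set W) (top_of_set H) p"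
    using cont pim by (simp add: image_subset_iff_funcset)
  have c3: "continuous_map (top_of_set H) (Euclidean_space (dim H)) \<psi>"
    using \<psi> homeomorphic_imp_continuous_map by blast
  have inv: "\<And>x. x \<in> W \<Longrightarrow> \<phi>' (\<phi> x) = x"
    using hm by (auto simp: homeomorphic_maps_map)
  have psiinj: "inj_on \<psi> H"
    using \<psi> homeomorphic_imp_injective_map by fastforce
  have "inj_on (\<psi> \<circ> p \<circ> \<phi>') V1"
    unfolding V1_def inj_on_def using inv W1W inj psiinj pim
    by (auto simp: inj_on_def) (metis image_subset_iff subsetD)
  then have "openin (Euclidean_space (dim H)) ((\<psi> \<circ> p \<circ> \<phi>') ` V1)"
    using invariance_of_domain_Euclidean_space_gen[OF dH V1] c1' c2 c3
    by (meson continuous_map_compose)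
  moreover have "(\<psi> \<circ> p \<circ> \<phi>') ` V1 = \<psi> ` (p ` W1)"
    unfolding V1_def using inv W1W by (force simp: image_comp)
  moreover have pW1: "p ` W1 \<subseteq> H" using pim W1W by blast
  ultimately show ?thesis
    using homeomorphic_map_openness[OF \<psi>, of "p ` W1"] pW1 by (simp add: image_comp)
qed


theorem corollary2:
  fixes X :: "(real^'n) set" and f :: "'m::finite \<Rightarrow> real^'n \<Rightarrow> real"
    and g :: "'m set" and y :: "real^'m"
  assumes "simple_problem X f"
    and "y \<in> manifold_interior (card g - 1) (eval_map f ` pareto_set X f g)"
  shows "\<forall>U h. U \<subseteq> eval_map f ` pareto_set X f g \<and>
           (\<exists>W. openin (top_of_set (eval_map f ` pareto_set X f g)) W \<and> y \<in> W \<and> W \<subseteq> U) \<and>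
           {} \<subset> h \<and> h \<subset> g
         \<longrightarrow> (\<exists>v\<in>U. dominates h v y \<and> dominates (g - h) y v)"
proof (intro allI impI, elim conjE exE)
  fix U h W'
  define Z where "Z = eval_map f ` pareto_set X f g"
  assume U: "U \<subseteq> eval_map f ` pareto_set X f g"
    and W'o: "openin (top_of_set (eval_map f ` pareto_set X f g)) W'" and yW': "y \<in> W'"
    and W'U: "W' \<subseteq> U" and hne: "{} \<subset> h" and hg: "h \<subset> g"
  from assms(2) obtain W V where Wo: "openin (top_of_set Z) W" and yW: "y \<in> W"
    and Vo: "openin (Euclidean_space (card g - 1)) V"
    and hom: "top_of_set W homeomorphic_space subtopology (Euclidean_space (card g - 1)) V"
    unfolding manifold_interior_def Z_def by blast
  obtain i0 where i0: "i0 \<in> g" "i0 \<notin> h" using hg by blast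
  have gne: "g \<noteq> {}" using i0 by blast
  have fin: "finite g" by simp
  define H where "H = {x::real^'m. \<forall>i. i \<notin> g - {i0} \<longrightarrow> x$i = 0}"
  have subH: "subspace H" by (auto simp: subspace_def H_def)
  have dH: "dim H = card g - 1"
  proof -
    have "vec.dim H = card (g - {i0})" unfolding H_def by (rule dim_substandard_cart)
    then show ?thesis using i0 by (metis dim_vec_eq card_Diff_singleton)
  qed
  define p where "p u = (\<chi> i. if i \<in> g then u$i - u$i0 else (0::real))" for u :: "real^'m"
  have WZ: "W \<subseteq> Z" using Wo by (meson openin_imp_subset topspace_euclidean_subtopology)
  have pH: "p ` W \<subseteq> H" by (auto simp: p_def H_def)
  have pcont: "continuous_on W p" unfolding p_def
    by (intro continuous_on_vec_lambda, case_tac "i \<in> g") (auto intro!: continuous_intros)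
  have par: "\<not> dominates g a b" if "a \<in> Z" "b \<in> Z" for a b
  proof
    assume d: "dominates g a b"
    from that obtain xa xb where "xa \<in> pareto_set X f g" "xb \<in> pareto_set X f g"
      "a = eval_map f xa" "b = eval_map f xb" unfolding Z_def by blast
    then show False using d gne by (auto simp: pareto_set_def)
  qed
  obtain k where hk: "homeomorphism (pareto_set X f g) (eval_sub f g ` pareto_set X f g) (eval_sub f g) k"
    using assms(1) unfolding simple_problem_def by blast
  have pinj: "inj_on p W"
  proof (rule inj_onI)
    fix u v assume uW: "u \<in> W" and vW: "v \<in> W" and puv: "p u = p v"
    define c where "c = u$i0 - v$i0"
    have cd: "u$i - v$i = c" if "i \<in> g" for i
      using arg_cong[OF puv, of "\<lambda>z. z$i"] that by (simp add: p_def c_def)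
    have uZ: "u \<in> Z" and vZ: "v \<in> Z" using uW vW WZ by auto
    have "\<not> c > 0"
    proof
      assume "c > 0"
      then have "dominates g v u" unfolding dominates_def using cd i0
        by (metis diff_gt_0_iff_gt less_eq_real_def)
      then show False using par uZ vZ by blast
    qed
    moreover have "\<not> c < 0"
    proof
      assume "c < 0"
      then have "dominates g u v" unfolding dominates_def using cd i0
        by (metis diff_less_0_iff_less less_eq_real_def)
      then show False using par uZ vZ by blast
    qed
    ultimately have eqg: "u$i = v$i" if "i \<in> g" for i using cd[OF that] by linarith
    from uZ vZ obtain xu xv where xu: "xu \<in> pareto_set X f g" "u = eval_map f xu"
      and xv: "xv \<in> pareto_set X f g" "v = eval_map f xv" unfolding Z_def by blast
    have "eval_sub f g xu = eval_sub f g xv"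
      using eqg xu xv by (auto simp: eval_sub_def eval_map_def vec_eq_iff)
    then have "xu = xv" using hk xu xv unfolding homeomorphism_def by metis
    then show "u = v" using xu xv by simp
  qed
  define W1 where "W1 = W \<inter> W'"
  have W1o: "openin (top_of_set W) W1"
  proof -
    have "openin (top_of_set Z) W1" unfolding W1_def using Wo W'o Z_def by auto
    then show ?thesis using openin_subset_trans[of Z W1 W] WZ W1_def by auto
  qed
  have "openin (top_of_set H) (p ` W1)"
    using iod_lemma[OF hom Vo W1o subH _ pcont pH pinj] dH by simp
  moreover have "p y \<in> p ` W1" using yW yW' W1_def by auto
  ultimately obtain e where e: "e > 0" and eH: "\<And>x'. x' \<in> H \<Longrightarrow> dist x' (p y) < e \<Longrightarrow> x' \<in> p ` W1"
    unfolding openin_euclidean_subtopology_iff by meson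
  define d where "d = (\<chi> i. if i \<in> h then -1 else (0::real))"
  have dHm: "d \<in> H" using hg i0 by (auto simp: d_def H_def)
  define t where "t = e / (2 * (norm d + 1))"
  have t0: "t > 0" unfolding t_def using e by (intro divide_pos_pos) (auto intro: add_nonneg_pos)
  have "t * norm d < e"
  proof -
    have "t * norm d \<le> t * (norm d + 1)" using t0 by simp
    also have "\<dots> = e / 2" proof -
      have "norm d + 1 > 0" by (simp add: add_nonneg_pos)
      then show ?thesis unfolding t_def by (simp add: field_simps)
    qed
    finally show ?thesis using e by simp
  qed
  moreover have "p y + t *\<^sub>R d \<in> H"
  proof -
    have "p y \<in> H" using pH yW by auto
    then show ?thesis using subH dHm by (simp add: subspace_add subspace_scale)
  qed
  ultimately obtain v where vW1: "v \<in> W1" and pv: "p v = p y + t *\<^sub>R d"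
    using eH[of "p y + t *\<^sub>R d"] t0 by (auto simp: dist_norm)
  have vU: "v \<in> U" using vW1 W1_def W'U by auto
  have vZ: "v \<in> Z" and yZ: "y \<in> Z" using vW1 W1_def WZ yW by auto
  define c where "c = v$i0 - y$i0"
  have comp: "v$i - y$i = c + t * d$i" if "i \<in> g" for i
    using arg_cong[OF pv, of "\<lambda>z. z$i"] that by (simp add: p_def c_def algebra_simps)
  have dh: "d$i = -1" if "i \<in> h" for i using that by (simp add: d_def)
  have dnh: "d$i = 0" if "i \<notin> h" for i using that by (simp add: d_def)
  obtain j where j: "j \<in> h" using hne by blast
  have hsub: "h \<subseteq> g" using hg by blast
  have c1: "c < t"
  proof (rule ccontr)
    assume "\<not> c < t"
    then have "dominates g y v" unfolding dominates_def
    proof (intro conjI)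
      show "\<forall>i\<in>g. y$i \<le> v$i"
      proof
        fix i assume ig: "i \<in> g"
        show "y$i \<le> v$i"
          using comp[OF ig] \<open>\<not> c < t\<close> t0 by (cases "i \<in> h") (auto simp: dh dnh)
      qed
      show "\<exists>j\<in>g. y$j < v$j"
        using comp[OF i0(1)] dnh[OF i0(2)] \<open>\<not> c < t\<close> t0 i0 by (intro bexI[of _ i0]) auto
    qed
    then show False using par yZ vZ by blast
  qed
  have c2: "c > 0"
  proof (rule ccontr)
    assume "\<not> c > 0"
    then have "dominates g v y" unfolding dominates_def
    proof (intro conjI)
      show "\<forall>i\<in>g. v$i \<le> y$i"
      proof
        fix i assume ig: "i \<in> g"
        show "v$i \<le> y$i"
          using comp[OF ig] \<open>\<not> c > 0\<close> t0 by (cases "i \<in> h") (auto simp: dh dnh)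
      qed
      show "\<exists>j\<in>g. v$j < y$j"
        using comp[of j] dh[OF j] j hsub \<open>\<not> c > 0\<close> t0 by (intro bexI[of _ j]) auto
    qed
    then show False using par yZ vZ by blast
  qed
  have "dominates h v y"
  proof -
    have "v$i < y$i" if "i \<in> h" for i
      using comp[of i] dh[OF that] hsub that c1 by auto
    then show ?thesis unfolding dominates_def using j by (auto intro: less_imp_le)
  qed
  moreover have "dominates (g - h) y v"
    unfolding dominates_def using comp dnh c2 i0
    by (metis DiffD1 DiffD2 DiffI add.right_neutral diff_gt_0_iff_gt less_eq_real_def mult_zero_right)
  ultimately show "\<exists>v\<in>U. dominates h v y \<and> dominates (g - h) y v" using vU by blast
qed

end
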